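(* Let $(X_1,X_2)$ be a preliminary and a primary test statistic for one-sided hypotheses, with (continuous, strictly increasing) marginal CDFs $F_{0;X_1}$ and $F_{0;X_2}$ under the true null. Assume the classical errors-in-variables model $\widetilde X_1=X_1+\eta$, where $\eta$ is independent of $(X_1,X_2)$, and the probability density function of $X_1$ under the true null and the probability density function of $\eta$ are both symmetric with respect to $0$. Set $(p_1,p_2)=(F_{0;X_1}(X_1),F_{0;X_2}(X_2))$ and $\tilde p_1=F_{0;X_1}(\widetilde X_1)$ for left-sided hypotheses, or $(p_1,p_2)=(1-F_{0;X_1}(X_1),1-F_{0;X_2}(X_2))$ and $\tilde p_1=1-F_{0;X_1}(\widetilde X_1)$ for right-sided hypotheses. If the joint probability density function of $(p_1,p_2)$ under the true null is centrally symmetric with respect to $(1/2,1/2)$, i.e. $f_0(p_1,p_2)=f_0(1-p_1,1-p_2)$, then the joint probability density function of $(\tilde p_1,p_2)$ under the true null is also centrally symmetric with respect to $(1/2,1/2)$. *)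

theory Defs
  imports "HOL-Probability.Probability"
begin

definition pval :: "bool \<Rightarrow> (real \<Rightarrow> real) \<Rightarrow> real \<Rightarrow> real" where
  "pval left F x = (if left then F x else 1 - F x)"

end

theory Submission
  imports Defs
begin

lemma inv_meas:
  fixes F :: "real \<Rightarrow> real"
  assumes "continuous_on UNIV F" "strict_mono F"
  shows "\<exists>G. G \<in> borel_measurable borel \<and> (\<forall>x. G (F x) = x)"
proof -
  define G where "G y = (if y \<in> range F then inv F y else 0)" for y
  have inj: "inj F" using assms(2) strict_mono_imp_inj_on by blast
  have GF: "G (F x) = x" for x using inj by (simp add: G_def)
  have "connected (range F)" using connected_continuous_image[OF assms(1) connected_UNIV] .
  hence rb: "range F \<in> sets borel"
    by (intro real_interval_borel_measurable) (simp add: is_interval_connected_1)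
  have m1: "mono_on (range F) G"
  proof (rule mono_onI)
    fix r s assume "r \<in> range F" "s \<in> range F" "r \<le> s"
    then obtain a b where "r = F a" "s = F b" by auto
    with \<open>r \<le> s\<close> show "G r \<le> G s" using GF assms(2) by (simp add: strict_mono_less_eq)
  qed
  have m2: "mono_on (- range F) G" by (rule mono_onI) (simp add: G_def)
  have "G \<in> borel_measurable borel"
    by (rule borel_measurable_piecewise_mono[of "{range F, - range F}"])
       (use rb m1 m2 in auto)
  thus ?thesis using GF by blast
qed

lemma distr_sym1:
  fixes \<phi> :: "real \<Rightarrow> ennreal"
  assumes [measurable]: "\<phi> \<in> borel_measurable borel" and s: "\<forall>x. \<phi> (- x) = \<phi> x"
  shows "distr (density lborel \<phi>) borel uminus = density lborel \<phi>"
proof -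
  have "density lborel \<phi> = density (distr lborel borel uminus) \<phi>"
    by (simp add: lborel_distr_uminus)
  also have "\<dots> = distr (density lborel (\<lambda>x. \<phi> (- x))) borel uminus"
    by (rule density_distr) auto
  also have "(\<lambda>x. \<phi> (- x)) = \<phi>" using s by auto
  finally show ?thesis by simp
qed

definition R2 :: "real \<times> real \<Rightarrow> real \<times> real" where
  "R2 z = (1 - fst z, 1 - snd z)"

lemma R2_meas[measurable]: "R2 \<in> measurable (lborel \<Otimes>\<^sub>M lborel) (lborel \<Otimes>\<^sub>M lborel)"
  unfolding R2_def by measurable

lemma lborel_distr_one_minus: "distr lborel borel (\<lambda>x::real. 1 - x) = lborel"
proof -
  have "distr lborel borel (\<lambda>x::real. 1 - x) = distr (distr lborel borel uminus) borel ((+) 1)"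
    by (subst distr_distr) (auto simp: comp_def)
  also have "\<dots> = lborel" by (simp add: lborel_distr_uminus lborel_distr_plus)
  finally show ?thesis .
qed

lemma lborel2_R2: "distr (lborel \<Otimes>\<^sub>M lborel) (lborel \<Otimes>\<^sub>M lborel) R2 = lborel \<Otimes>\<^sub>M lborel"
proof -
  have "distr lborel borel (\<lambda>x::real. 1 - x) \<Otimes>\<^sub>M distr lborel borel (\<lambda>x::real. 1 - x)
     = distr (lborel \<Otimes>\<^sub>M lborel) (borel \<Otimes>\<^sub>M borel) (\<lambda>(x, y). (1 - x, 1 - y))"
    by (rule pair_measure_distr) (auto simp: lborel_distr_one_minus intro: lborel.sigma_finite_measure_axioms)
  also have "\<dots> = distr (lborel \<Otimes>\<^sub>M lborel) (lborel \<Otimes>\<^sub>M lborel) R2"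
    by (rule distr_cong) (auto simp: R2_def intro!: sets_pair_measure_cong)
  finally show ?thesis by (simp add: lborel_distr_one_minus)
qed

lemma distr_R2_density:
  assumes [measurable]: "\<phi> \<in> borel_measurable (lborel \<Otimes>\<^sub>M lborel)"
  shows "distr (density (lborel \<Otimes>\<^sub>M lborel) \<phi>) (lborel \<Otimes>\<^sub>M lborel) R2
       = density (lborel \<Otimes>\<^sub>M lborel) (\<lambda>z. \<phi> (R2 z))"
proof -
  have RR: "R2 (R2 z) = z" for z by (simp add: R2_def)
  have "density (lborel \<Otimes>\<^sub>M lborel) (\<lambda>z. \<phi> (R2 z))
      = density (distr (lborel \<Otimes>\<^sub>M lborel) (lborel \<Otimes>\<^sub>M lborel) R2) (\<lambda>z. \<phi> (R2 z))"
    by (simp add: lborel2_R2)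
  also have "\<dots> = distr (density (lborel \<Otimes>\<^sub>M lborel) (\<lambda>z. \<phi> (R2 (R2 z)))) (lborel \<Otimes>\<^sub>M lborel) R2"
    by (rule density_distr) auto
  finally show ?thesis by (simp add: RR)
qed


lemma cont_meas: "continuous_on UNIV (F::real\<Rightarrow>real) \<Longrightarrow> F \<in> borel_measurable borel"
  using borel_measurable_continuous_onI by blast

theorem proposition3:
  fixes M :: "'a measure" and X1 X2 eta :: "'a \<Rightarrow> real" and left :: bool
    and f1 g :: "real \<Rightarrow> ennreal" and f0 h :: "real \<times> real \<Rightarrow> ennreal"
  defines "F1 \<equiv> cdf (distr M borel X1)" and "F2 \<equiv> cdf (distr M borel X2)"
  assumes "prob_space M"
    and "X1 \<in> borel_measurable M" and "X2 \<in> borel_measurable M" and "eta \<in> borel_measurable M"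
    and "continuous_on UNIV F1" and "strict_mono F1"
    and "continuous_on UNIV F2" and "strict_mono F2"
    and "prob_space.indep_set M {eta -` A \<inter> space M | A. A \<in> sets (borel :: real measure)}
           {(\<lambda>\<omega>. (X1 \<omega>, X2 \<omega>)) -` B \<inter> space M | B. B \<in> sets (borel :: (real \<times> real) measure)}"
    and "distributed M lborel X1 f1" and "\<forall>x. f1 (- x) = f1 x"
    and "distributed M lborel eta g" and "\<forall>x. g (- x) = g x"
    and "distributed M (lborel \<Otimes>\<^sub>M lborel)
           (\<lambda>\<omega>. (pval left F1 (X1 \<omega>), pval left F2 (X2 \<omega>))) f0"
    and "\<forall>a b. f0 (1 - a, 1 - b) = f0 (a, b)"
    and "distributed M (lborel \<Otimes>\<^sub>M lborel)
           (\<lambda>\<omega>. (pval left F1 (X1 \<omega> + eta \<omega>), pval left F2 (X2 \<omega>))) h"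
  shows "AE z in lborel \<Otimes>\<^sub>M lborel. h (1 - fst z, 1 - snd z) = h z"
proof -
  interpret P: prob_space M by fact
  note [measurable] = assms(4,5,6)
  have F1m[measurable]: "F1 \<in> borel_measurable borel" using assms(7) by (rule cont_meas)
  have F2m[measurable]: "F2 \<in> borel_measurable borel" using assms(9) by (rule cont_meas)
  define u where "u = pval left F1"
  define v where "v = pval left F2"
  have um[measurable]: "u \<in> borel_measurable borel" unfolding u_def pval_def by measurable
  have vm[measurable]: "v \<in> borel_measurable borel" unfolding v_def pval_def by measurable
  have f1m[measurable]: "f1 \<in> borel_measurable borel" using assms(12) by (simp add: distributed_def)
  have P1: "distr M borel X1 = density lborel f1"
  proof -
    have "distr M borel X1 = distr M lborel X1" by (rule distr_cong) auto
    also have "\<dots> = density lborel f1" using assms(12) by (simp add: distributed_def)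
    finally show ?thesis .
  qed
  interpret D: real_distribution "distr M borel X1" by (rule P.real_distribution_distr) simp
  have Dsym: "distr (distr M borel X1) borel uminus = distr M borel X1"
    unfolding P1 using assms(13) by (intro distr_sym1) auto
  have Fsym: "F1 (- x) = 1 - F1 x" for x
  proof -
    have "F1 (- x) = measure (distr (distr M borel X1) borel uminus) {.. - x}"
      unfolding F1_def cdf_def Dsym ..
    also have "\<dots> = measure (distr M borel X1) {x..}"
      by (subst measure_distr) (auto intro!: arg_cong2[where f=measure])
    also have "\<dots> = 1 - measure (distr M borel X1) {..<x}"
    proof -
      have "{x..} = space (distr M borel X1) - {..<x}" by auto
      thus ?thesis using D.prob_compl[of "{..<x}"] by simp
    qed
    also have "measure (distr M borel X1) {..<x} = F1 x"
    proof -
      have "isCont F1 x" using assms(7) by (simp add: continuous_on_eq_continuous_at)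
      hence z: "measure (distr M borel X1) {x} = 0" unfolding F1_def by (simp add: D.isCont_cdf)
      have "F1 x = measure (distr M borel X1) ({..<x} \<union> {x})"
        unfolding F1_def cdf_def by (intro arg_cong2[where f=measure]) auto
      also have "\<dots> = measure (distr M borel X1) {..<x} + measure (distr M borel X1) {x}"
        by (intro D.finite_measure_Union) auto
      finally show ?thesis using z by simp
    qed
    finally show ?thesis .
  qed
  have usym: "1 - u x = u (- x)" for x
    unfolding u_def pval_def using Fsym[of x] Fsym[of "-x"] by auto
  obtain G where Gm[measurable]: "G \<in> borel_measurable borel" and GF: "\<And>x. G (F1 x) = x"
    using inv_meas[OF assms(7,8)] by blast
  define uinv where "uinv = (if left then G else (\<lambda>y. G (1 - y)))"
  have uinvm[measurable]: "uinv \<in> borel_measurable borel" unfolding uinv_def by simp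
  have uinv: "uinv (u x) = x" for x unfolding uinv_def u_def pval_def by (simp add: GF)
  define Y where "Y = (\<lambda>\<omega>. (u (X1 \<omega>), v (X2 \<omega>)))"
  define Wv where "Wv = (\<lambda>\<omega>. (X1 \<omega>, v (X2 \<omega>)))"
  define S where "S = (\<lambda>z::real\<times>real. (- fst z, 1 - snd z))"
  define L where "L = (\<lambda>z::real\<times>real. (uinv (fst z), snd z))"
  have Ym[measurable]: "Y \<in> measurable M (lborel \<Otimes>\<^sub>M lborel)" unfolding Y_def by measurable
  have Wvm[measurable]: "Wv \<in> measurable M (lborel \<Otimes>\<^sub>M lborel)" unfolding Wv_def by measurable
  have Sm[measurable]: "S \<in> measurable (lborel \<Otimes>\<^sub>M lborel) (lborel \<Otimes>\<^sub>M lborel)" unfolding S_def by measurable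
  have Lm[measurable]: "L \<in> measurable (lborel \<Otimes>\<^sub>M lborel) (lborel \<Otimes>\<^sub>M lborel)" unfolding L_def by measurable
  have f0m[measurable]: "f0 \<in> borel_measurable (lborel \<Otimes>\<^sub>M lborel)" using assms(16) by (simp add: distributed_def)
  have P0: "distr M (lborel \<Otimes>\<^sub>M lborel) Y = density (lborel \<Otimes>\<^sub>M lborel) f0"
    using assms(16) unfolding Y_def u_def v_def by (simp add: distributed_def)
  have P0sym: "distr (distr M (lborel \<Otimes>\<^sub>M lborel) Y) (lborel \<Otimes>\<^sub>M lborel) R2 = distr M (lborel \<Otimes>\<^sub>M lborel) Y"
  proof -
    have "(\<lambda>z. f0 (R2 z)) = f0" using assms(17) by (auto simp: R2_def)
    thus ?thesis unfolding P0 by (simp add: distr_R2_density)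
  qed
  define Q where "Q = distr M (lborel \<Otimes>\<^sub>M lborel) Wv"
  have QS: "distr Q (lborel \<Otimes>\<^sub>M lborel) S = Q"
  proof -
    have "distr Q (lborel \<Otimes>\<^sub>M lborel) S = distr M (lborel \<Otimes>\<^sub>M lborel) (S \<circ> Wv)"
      unfolding Q_def by (rule distr_distr) auto
    also have "\<dots> = distr M (lborel \<Otimes>\<^sub>M lborel) (L \<circ> (R2 \<circ> Y))"
      by (rule distr_cong) (auto simp: S_def Wv_def L_def R2_def Y_def usym uinv)
    also have "\<dots> = distr (distr (distr M (lborel \<Otimes>\<^sub>M lborel) Y) (lborel \<Otimes>\<^sub>M lborel) R2) (lborel \<Otimes>\<^sub>M lborel) L"
      by (simp add: distr_distr)
    also have "\<dots> = distr M (lborel \<Otimes>\<^sub>M lborel) (L \<circ> Y)"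
      unfolding P0sym by (simp add: distr_distr)
    also have "\<dots> = Q"
      unfolding Q_def by (rule distr_cong) (auto simp: L_def Y_def Wv_def uinv)
    finally show ?thesis .
  qed
  define E where "E = (\<lambda>\<omega>. (eta \<omega>, 0::real))"
  define W where "W = (\<lambda>\<omega>. (X1 \<omega>, X2 \<omega>))"
  have Em[measurable]: "E \<in> measurable M (lborel \<Otimes>\<^sub>M lborel)" unfolding E_def by measurable
  have Eb[measurable]: "E \<in> measurable M borel" unfolding E_def by measurable
  have Wm[measurable]: "W \<in> measurable M borel" unfolding W_def by measurable
  have setsE: "{E -` A \<inter> space M | A. A \<in> sets (borel :: (real\<times>real) measure)}
      = {eta -` A \<inter> space M | A. A \<in> sets (borel :: real measure)}"
  proof (intro set_eqI iffI)
    fix B assume "B \<in> {E -` A \<inter> space M | A. A \<in> sets (borel :: (real\<times>real) measure)}"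
    then obtain A where A: "A \<in> sets (borel :: (real\<times>real) measure)" "B = E -` A \<inter> space M" by auto
    have "(\<lambda>x::real. (x, 0::real)) \<in> borel_measurable borel" by measurable
    hence "(\<lambda>x::real. (x, 0::real)) -` A \<in> sets borel" using A(1) by (metis measurable_sets space_borel Int_UNIV_right)
    moreover have "B = eta -` ((\<lambda>x::real. (x, 0::real)) -` A) \<inter> space M" using A(2) by (auto simp: E_def)
    ultimately show "B \<in> {eta -` A \<inter> space M | A. A \<in> sets (borel :: real measure)}" by blast
  next
    fix B assume "B \<in> {eta -` A \<inter> space M | A. A \<in> sets (borel :: real measure)}"
    then obtain A where A: "A \<in> sets (borel :: real measure)" "B = eta -` A \<inter> space M" by auto
    have "A \<times> UNIV \<in> sets (borel :: (real\<times>real) measure)"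
    proof -
      have fm: "(fst :: real\<times>real \<Rightarrow> real) \<in> borel_measurable borel"
        by (intro borel_measurable_continuous_onI continuous_intros)
      have "fst -` A \<in> sets (borel :: (real\<times>real) measure)" using measurable_sets[OF fm A(1)] by simp
      moreover have "fst -` A = A \<times> (UNIV::real set)" by auto
      ultimately show ?thesis by simp
    qed
    moreover have "B = E -` (A \<times> UNIV) \<inter> space M" using A(2) by (auto simp: E_def)
    ultimately show "B \<in> {E -` A \<inter> space M | A. A \<in> sets (borel :: (real\<times>real) measure)}" by blast
  qed
  have ind0: "P.indep_var borel E borel W"
    unfolding P.indep_var_def P.indep_vars_def2
  proof
    show "\<forall>i\<in>UNIV. case_bool E W i \<in> measurable M (case_bool borel borel i)"
      using Eb Wm by (auto split: bool.split)
    have "(\<lambda>i. {case_bool E W i -` A \<inter> space M |A. A \<in> sets (case_bool borel borel i :: (real\<times>real) measure)})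
       = case_bool {eta -` A \<inter> space M | A. A \<in> sets (borel :: real measure)}
           {(\<lambda>\<omega>. (X1 \<omega>, X2 \<omega>)) -` B \<inter> space M | B. B \<in> sets (borel :: (real \<times> real) measure)}"
      by (rule ext) (auto simp: setsE[symmetric] W_def split: bool.split)
    thus "P.indep_sets (\<lambda>i. {case_bool E W i -` A \<inter> space M |A. A \<in> sets (case_bool borel borel i)}) UNIV"
      using assms(11) unfolding P.indep_set_def by simp
  qed
  have "P.indep_var (lborel \<Otimes>\<^sub>M lborel) (id \<circ> E) (lborel \<Otimes>\<^sub>M lborel) ((\<lambda>z. (fst z, v (snd z))) \<circ> W)"
  proof (rule P.indep_var_compose[OF ind0])
    have ms: "measurable borel (lborel \<Otimes>\<^sub>M lborel) = measurable (borel \<Otimes>\<^sub>M borel :: (real\<times>real) measure) (borel :: (real\<times>real) measure)"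
    proof (rule measurable_cong_sets)
      show "sets (borel :: (real\<times>real) measure) = sets (borel \<Otimes>\<^sub>M borel :: (real\<times>real) measure)" by (simp only: borel_prod)
      have "sets (lborel \<Otimes>\<^sub>M lborel) = sets (borel \<Otimes>\<^sub>M (borel :: real measure))"
        by (rule sets_pair_measure_cong) simp_all
      thus "sets (lborel \<Otimes>\<^sub>M lborel) = sets (borel :: (real\<times>real) measure)" by (simp only: borel_prod)
    qed
    show "(id :: real\<times>real \<Rightarrow> real\<times>real) \<in> measurable borel (lborel \<Otimes>\<^sub>M lborel)" 
    proof -
      have "(id :: real\<times>real \<Rightarrow> real\<times>real) \<in> measurable (borel \<Otimes>\<^sub>M borel :: (real\<times>real) measure) (borel::(real\<times>real) measure)"
        by (simp only: borel_prod) (rule measurable_ident)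
      thus ?thesis by (subst ms)
    qed
    have "(\<lambda>z::real\<times>real. (fst z, v (snd z))) \<in> measurable (borel \<Otimes>\<^sub>M borel) (lborel \<Otimes>\<^sub>M lborel)"
      by measurable
    thus "(\<lambda>z::real\<times>real. (fst z, v (snd z))) \<in> measurable borel (lborel \<Otimes>\<^sub>M lborel)"
      by (simp only: borel_prod)
  qed
  moreover have "(\<lambda>z. (fst z, v (snd z))) \<circ> W = Wv" by (auto simp: W_def Wv_def)
  ultimately have ind: "P.indep_var (lborel \<Otimes>\<^sub>M lborel) E (lborel \<Otimes>\<^sub>M lborel) Wv" by simp
  define PE where "PE = distr M (lborel \<Otimes>\<^sub>M lborel) E"
  have prod: "PE \<Otimes>\<^sub>M Q = distr M ((lborel \<Otimes>\<^sub>M lborel) \<Otimes>\<^sub>M (lborel \<Otimes>\<^sub>M lborel)) (\<lambda>\<omega>. (E \<omega>, Wv \<omega>))"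
    using ind unfolding P.indep_var_distribution_eq PE_def Q_def by blast
  define Ng where "Ng = (\<lambda>z::real\<times>real. (- fst z, snd z))"
  have Ngm[measurable]: "Ng \<in> measurable (lborel \<Otimes>\<^sub>M lborel) (lborel \<Otimes>\<^sub>M lborel)" unfolding Ng_def by measurable
  have gm[measurable]: "g \<in> borel_measurable borel" using assms(14) by (simp add: distributed_def)
  have Peta: "distr M borel eta = density lborel g"
  proof -
    have "distr M borel eta = distr M lborel eta" by (rule distr_cong) auto
    also have "\<dots> = density lborel g" using assms(14) by (simp add: distributed_def)
    finally show ?thesis .
  qed
  have etasym: "distr (distr M borel eta) borel uminus = distr M borel eta"
    unfolding Peta using assms(15) by (intro distr_sym1) auto
  have PEsym: "distr PE (lborel \<Otimes>\<^sub>M lborel) Ng = PE"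
  proof -
    have "distr PE (lborel \<Otimes>\<^sub>M lborel) Ng = distr M (lborel \<Otimes>\<^sub>M lborel) (Ng \<circ> E)"
      unfolding PE_def by (rule distr_distr) auto
    also have "\<dots> = distr M (lborel \<Otimes>\<^sub>M lborel) ((\<lambda>x. (x, 0)) \<circ> (uminus \<circ> eta))"
      by (rule distr_cong) (auto simp: Ng_def E_def)
    also have "\<dots> = distr (distr (distr M borel eta) borel uminus) (lborel \<Otimes>\<^sub>M lborel) (\<lambda>x. (x, 0))"
      by (simp add: distr_distr)
    also have "\<dots> = distr M (lborel \<Otimes>\<^sub>M lborel) ((\<lambda>x. (x, 0)) \<circ> eta)"
      unfolding etasym by (simp add: distr_distr)
    also have "\<dots> = PE" unfolding PE_def by (rule distr_cong) (auto simp: E_def)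
    finally show ?thesis .
  qed
  define H where "H = (\<lambda>p::(real\<times>real)\<times>(real\<times>real). (u (fst (snd p) + fst (fst p)), snd (snd p)))"
  have Hm[measurable]: "H \<in> measurable ((lborel \<Otimes>\<^sub>M lborel) \<Otimes>\<^sub>M (lborel \<Otimes>\<^sub>M lborel)) (lborel \<Otimes>\<^sub>M lborel)"
    unfolding H_def by measurable
  have sPQ: "sets (PE \<Otimes>\<^sub>M Q) = sets ((lborel \<Otimes>\<^sub>M lborel) \<Otimes>\<^sub>M (lborel \<Otimes>\<^sub>M lborel))"
    unfolding PE_def Q_def by (rule sets_pair_measure_cong) simp_all
  have HmPQ[measurable]: "H \<in> measurable (PE \<Otimes>\<^sub>M Q) (lborel \<Otimes>\<^sub>M lborel)"
    using Hm by (simp add: measurable_cong_sets[OF sPQ refl])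
  have NSm: "(\<lambda>(x, y). (Ng x, S y)) \<in> measurable (PE \<Otimes>\<^sub>M Q) ((lborel \<Otimes>\<^sub>M lborel) \<Otimes>\<^sub>M (lborel \<Otimes>\<^sub>M lborel))"
  proof -
    have "(\<lambda>(x, y). (Ng x, S y)) \<in> measurable ((lborel \<Otimes>\<^sub>M lborel) \<Otimes>\<^sub>M (lborel \<Otimes>\<^sub>M lborel)) ((lborel \<Otimes>\<^sub>M lborel) \<Otimes>\<^sub>M (lborel \<Otimes>\<^sub>M lborel))"
      by measurable
    thus ?thesis by (simp add: measurable_cong_sets[OF sPQ refl])
  qed
  define T where "T = distr M (lborel \<Otimes>\<^sub>M lborel)
           (\<lambda>\<omega>. (pval left F1 (X1 \<omega> + eta \<omega>), pval left F2 (X2 \<omega>)))"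
  have T: "T = distr (PE \<Otimes>\<^sub>M Q) (lborel \<Otimes>\<^sub>M lborel) H"
  proof -
    have "T = distr M (lborel \<Otimes>\<^sub>M lborel) (H \<circ> (\<lambda>\<omega>. (E \<omega>, Wv \<omega>)))"
      unfolding T_def by (rule distr_cong) (auto simp: H_def E_def Wv_def u_def v_def)
    also have "\<dots> = distr (PE \<Otimes>\<^sub>M Q) (lborel \<Otimes>\<^sub>M lborel) H"
      unfolding prod by (simp add: distr_distr)
    finally show ?thesis .
  qed
  have PEp: "prob_space PE" unfolding PE_def by (rule P.prob_space_distr) simp
  have Qp: "prob_space Q" unfolding Q_def by (rule P.prob_space_distr) simp
  have Tsym: "distr T (lborel \<Otimes>\<^sub>M lborel) R2 = T"
  proof -
    have "distr T (lborel \<Otimes>\<^sub>M lborel) R2 = distr (PE \<Otimes>\<^sub>M Q) (lborel \<Otimes>\<^sub>M lborel) (R2 \<circ> H)"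
      unfolding T by (rule distr_distr) auto
    also have "\<dots> = distr (PE \<Otimes>\<^sub>M Q) (lborel \<Otimes>\<^sub>M lborel) (H \<circ> (\<lambda>(x, y). (Ng x, S y)))"
    proof (rule distr_cong)
      fix p :: "(real\<times>real)\<times>(real\<times>real)"
      have "1 - u (fst (snd p) + fst (fst p)) = u (- fst (snd p) + - fst (fst p))"
        using usym[of "fst (snd p) + fst (fst p)"] by simp
      thus "(R2 \<circ> H) p = (H \<circ> (\<lambda>(x, y). (Ng x, S y))) p"
        by (cases p) (auto simp: R2_def H_def Ng_def S_def)
    qed auto
    also have "\<dots> = distr (distr (PE \<Otimes>\<^sub>M Q) ((lborel \<Otimes>\<^sub>M lborel) \<Otimes>\<^sub>M (lborel \<Otimes>\<^sub>M lborel)) (\<lambda>(x, y). (Ng x, S y))) (lborel \<Otimes>\<^sub>M lborel) H"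
      by (rule distr_distr[symmetric]) (auto intro: NSm)
    also have "distr (PE \<Otimes>\<^sub>M Q) ((lborel \<Otimes>\<^sub>M lborel) \<Otimes>\<^sub>M (lborel \<Otimes>\<^sub>M lborel)) (\<lambda>(x, y). (Ng x, S y))
        = distr PE (lborel \<Otimes>\<^sub>M lborel) Ng \<Otimes>\<^sub>M distr Q (lborel \<Otimes>\<^sub>M lborel) S"
    proof (rule pair_measure_distr[symmetric])
      show "Ng \<in> measurable PE (lborel \<Otimes>\<^sub>M lborel)" unfolding PE_def by simp
      show "S \<in> measurable Q (lborel \<Otimes>\<^sub>M lborel)" unfolding Q_def by simp
    qed (auto simp: QS intro: prob_space_imp_sigma_finite Qp)
    also have "\<dots> = PE \<Otimes>\<^sub>M Q" by (simp add: QS PEsym)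
    finally show ?thesis unfolding T .
  qed
  have hm[measurable]: "h \<in> borel_measurable (lborel \<Otimes>\<^sub>M lborel)" using assms(18) by (simp add: distributed_def)
  have Th: "T = density (lborel \<Otimes>\<^sub>M lborel) h" using assms(18) unfolding T_def by (simp add: distributed_def)
  have eq: "density (lborel \<Otimes>\<^sub>M lborel) (\<lambda>z. h (R2 z)) = density (lborel \<Otimes>\<^sub>M lborel) h"
    using Tsym unfolding Th by (simp add: distr_R2_density)
  have Tp: "prob_space T" unfolding T_def by (rule P.prob_space_distr) (use assms(18) in \<open>simp add: distributed_def\<close>)
  have "AE z in lborel \<Otimes>\<^sub>M lborel. h (R2 z) = h z"
  proof (rule sigma_finite_density_unique[THEN iffD1, OF _ _ _ eq])
    show "sigma_finite_measure (density (lborel \<Otimes>\<^sub>M lborel) (\<lambda>z. h (R2 z)))"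
      using eq Th Tp by (simp add: prob_space_imp_sigma_finite)
  qed auto
  thus ?thesis by (simp add: R2_def)
qed
end
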